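(* For each $n\ge 2$ and $\ell\ge 2$ there exists a lattice tiling of $\mathbb{Z}^n$ with $\mathcal{S}_{L,K}$, where $L=(\ell,\ell,\dots,\ell)$ and $K=(\ell-1,\ell-1,\dots,\ell-1)$.
   Context: The discrete $n$-dimensional chair is $\mathcal{S}_{L,K}=\{(x_1,\dots,x_n)\in\mathbb{Z}^n: 0\le x_i<\ell_i \text{ for all } i, \text{ and there exists } j \text{ with } x_j<\ell_j-k_j\}$. A lattice is the set of integer combinations of $n$ linearly independent vectors of $\mathbb{Z}^n$; a lattice tiling of $\mathbb{Z}^n$ with a finite $\mathcal{S}\subset\mathbb{Z}^n$ is a lattice $\Lambda$ such that the translates $X+\mathcal{S}$, $X\in\Lambda$, are pairwise disjoint and cover $\mathbb{Z}^n$. *)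

theory Defs
  imports Complex_Main
begin

definition int_space :: "nat \<Rightarrow> int list set" where
  "int_space n = {x. length x = n}"

definition chair :: "nat \<Rightarrow> int list \<Rightarrow> int list \<Rightarrow> int list set" where
  "chair n L K = {x. length x = n \<and> (\<forall>i<n. 0 \<le> x ! i \<and> x ! i < L ! i)
                    \<and> (\<exists>j<n. x ! j < L ! j - K ! j)}"

definition translate :: "int list \<Rightarrow> int list set \<Rightarrow> int list set" where
  "translate X S = (\<lambda>s. map2 (+) X s) ` S"

definition is_lattice :: "nat \<Rightarrow> int list set \<Rightarrow> bool" where
  "is_lattice n \<Lambda> \<longleftrightarrow> (\<exists>b :: nat \<Rightarrow> int list.
      (\<forall>i<n. length (b i) = n) \<and>
      (\<forall>c :: nat \<Rightarrow> real. (\<forall>j<n. (\<Sum>i<n. c i * real_of_int (b i ! j)) = 0)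
          \<longrightarrow> (\<forall>i<n. c i = 0)) \<and>
      \<Lambda> = {map (\<lambda>j. \<Sum>i<n. z i * (b i ! j)) [0..<n] | z :: nat \<Rightarrow> int. True})"

definition lattice_tiling :: "nat \<Rightarrow> int list set \<Rightarrow> int list set \<Rightarrow> bool" where
  "lattice_tiling n \<Lambda> S \<longleftrightarrow> is_lattice n \<Lambda> \<and>
     (\<forall>X\<in>\<Lambda>. \<forall>Y\<in>\<Lambda>. X \<noteq> Y \<longrightarrow> translate X S \<inter> translate Y S = {}) \<and>
     (\<Union>X\<in>\<Lambda>. translate X S) = int_space n"

end

theory Submission
  imports Defs
begin

definition pr :: "nat \<Rightarrow> nat \<Rightarrow> nat" where
  "pr n j = (if j = 0 then n - 1 else j - 1)"

definition bv :: "nat \<Rightarrow> int \<Rightarrow> nat \<Rightarrow> int list" where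
  "bv n l i = map (\<lambda>j. (if j = i then l else 0) - (if i = pr n j then l - 1 else 0)) [0..<n]"

lemma pr_lt: "n > 0 \<Longrightarrow> pr n j < n \<longleftrightarrow> True" if "j < n"
  using that unfolding pr_def by auto

lemma pr_less: "j < n \<Longrightarrow> pr n j < n"
  unfolding pr_def by auto

lemma pr_neq: "n \<ge> 2 \<Longrightarrow> j < n \<Longrightarrow> pr n j \<noteq> j"
  unfolding pr_def by auto

lemma rowsum:
  fixes f :: "nat \<Rightarrow> 'a::comm_ring_1"
  assumes "j < n" and "n \<ge> 2"
  shows "(\<Sum>i<n. f i * of_int (bv n l i ! j)) = f j * of_int l - f (pr n j) * of_int (l - 1)"
proof -
  have "(\<Sum>i<n. f i * of_int (bv n l i ! j)) =
        (\<Sum>i<n. (if j = i then f i * of_int l else 0) - (if i = pr n j then f i * of_int (l - 1) else 0))"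
    using assms pr_neq[OF assms(2,1)] by (intro sum.cong) (auto simp: bv_def algebra_simps)
  also have "\<dots> = (\<Sum>i<n. (if j = i then f i * of_int l else 0)) - (\<Sum>i<n. (if i = pr n j then f i * of_int (l - 1) else 0))"
    by (simp add: sum_subtractf)
  also have "\<dots> = f j * of_int l - f (pr n j) * of_int (l - 1)"
    using assms pr_less[OF assms(1)] pr_neq[OF assms(2,1)] by (simp add: sum.delta algebra_simps)
  finally show ?thesis .
qed

lemma rowsum_int:
  fixes f :: "nat \<Rightarrow> int"
  assumes "j < n" and "n \<ge> 2"
  shows "(\<Sum>i<n. f i * (bv n l i ! j)) = l * f j - (l - 1) * f (pr n j)"
  using rowsum[OF assms, of f l] by (simp add: mult.commute)

lemma cycle:
  assumes n: "n > 0" and st: "\<forall>j<n. P j \<longrightarrow> P (pr n j)" and j0: "j0 < n" "P j0"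
  shows "\<forall>j<n. P j"
proof -
  have "\<forall>k\<le>j0. P (j0 - k)"
  proof (intro allI impI)
    fix k assume "k \<le> j0" then show "P (j0 - k)"
    proof (induction k)
      case 0 then show ?case using j0 by simp
    next
      case (Suc k)
      then have "P (j0 - k)" by simp
      moreover have "pr n (j0 - k) = j0 - Suc k" using Suc.prems unfolding pr_def by auto
      ultimately show ?case using st j0 Suc.prems by (metis diff_le_self le_less_trans)
    qed
  qed
  then have P0: "P 0" by (metis diff_self_eq_0 order_refl)
  have Pn: "P (n - 1)" using st P0 n unfolding pr_def by auto
  have "\<forall>k<n. P (n - 1 - k)"
  proof (intro allI impI)
    fix k assume "k < n" then show "P (n - 1 - k)"
    proof (induction k)
      case 0 then show ?case using Pn by simp
    next
      case (Suc k)
      then have "P (n - 1 - k)" by simp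
      moreover have "pr n (n - 1 - k) = n - 1 - Suc k" using Suc.prems unfolding pr_def by auto
      ultimately show ?case using st Suc.prems by (metis diff_le_self le_less_trans diff_less n zero_less_one)
    qed
  qed
  then show ?thesis by (metis diff_diff_cancel diff_le_self less_imp_diff_less le_less_trans n
        Suc_pred' less_Suc_eq_le)
qed

lemma nonpos:
  fixes d s t :: "nat \<Rightarrow> int"
  assumes n: "n > 0" and l: "l \<ge> 1"
  and e: "\<forall>j<n. s j - t j = l * d j - (l - 1) * d (pr n j)"
  and s: "\<forall>j<n. 0 \<le> s j \<and> s j < l" and t: "\<forall>j<n. 0 \<le> t j \<and> t j < l"
  and z: "\<exists>j<n. s j = 0"
  shows "\<forall>j<n. d j \<le> 0"
proof (rule ccontr)
  assume "\<not> ?thesis"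
  then obtain j1 where j1: "j1 < n" "d j1 > 0" by auto
  define M where "M = Max (d ` {..<n})"
  have Mge: "\<forall>j<n. d j \<le> M" unfolding M_def by (auto intro: Max_ge)
  have "M \<in> d ` {..<n}" unfolding M_def using n by (intro Max_in) auto
  then obtain j0 where j0: "j0 < n" "d j0 = M" by auto
  have Mpos: "M > 0" using Mge j1 by force
  have step: "\<forall>j<n. d j = M \<longrightarrow> d (pr n j) = M"
  proof (intro allI impI)
    fix j assume j: "j < n" "d j = M"
    have "pr n j < n" using j pr_less by auto
    hence le: "d (pr n j) \<le> M" using Mge by auto
    show "d (pr n j) = M"
    proof (rule ccontr)
      assume "d (pr n j) \<noteq> M"
      then have "d (pr n j) \<le> M - 1" using le by auto
      then have "(l - 1) * d (pr n j) \<le> (l - 1) * (M - 1)" using l by (intro mult_left_mono) auto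
      moreover have "s j - t j < l" using s t j by force
      ultimately show False using e j Mpos by (auto simp: algebra_simps)
    qed
  qed
  have all: "\<forall>j<n. d j = M" using cycle[OF n step j0] by blast
  obtain j2 where j2: "j2 < n" "s j2 = 0" using z by auto
  have "pr n j2 < n" using j2 pr_less by auto
  then have "s j2 - t j2 = M" using e all j2 by (auto simp: algebra_simps)
  then show False using t j2 Mpos by force
qed

lemma chair_eq:
  "chair n (replicate n l) (replicate n (l - 1)) =
     {x. length x = n \<and> (\<forall>i<n. 0 \<le> x ! i \<and> x ! i < l) \<and> (\<exists>j<n. x ! j = 0)}"
  unfolding chair_def by (auto; force)

lemma sum_pr:
  fixes c :: "nat \<Rightarrow> int"
  assumes "n > 0"
  shows "(\<Sum>j<n. c (pr n j)) = (\<Sum>j<n. c j)"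
proof -
  obtain m where m: "n = Suc m" using assms by (cases n) auto
  have "(\<Sum>j<Suc m. c (pr n j)) = c (pr n 0) + (\<Sum>j<m. c (pr n (Suc j)))"
    by (rule sum.lessThan_Suc_shift)
  also have "\<dots> = c m + (\<Sum>j<m. c j)" using m by (simp add: pr_def)
  also have "\<dots> = (\<Sum>j<Suc m. c j)" by simp
  finally show ?thesis using m by simp
qed

theorem mainTheorem8:
  fixes n :: nat and l :: int
  assumes "n \<ge> 2" and "l \<ge> 2"
  shows "\<exists>\<Lambda>. lattice_tiling n \<Lambda> (chair n (replicate n l) (replicate n (l - 1)))"
proof -
  have n2: "n \<ge> 2" and l2: "l \<ge> 2" and n0: "n > 0" using assms by auto
  define b where "b = bv n l"
  define Xv where "Xv z = map (\<lambda>j. \<Sum>i<n. z i * (b i ! j)) [0..<n]" for z :: "nat \<Rightarrow> int"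
  have Xv_nth: "Xv z ! j = l * z j - (l - 1) * z (pr n j)" if "j < n" for z j
    using rowsum_int[OF that n2] that by (simp add: Xv_def b_def)
  have Xv_len: "length (Xv z) = n" for z by (simp add: Xv_def)
  define \<Lambda> where "\<Lambda> = {map (\<lambda>j. \<Sum>i<n. z i * (b i ! j)) [0..<n] | z :: nat \<Rightarrow> int. True}"
  have \<Lambda>_eq: "\<Lambda> = range Xv" unfolding \<Lambda>_def Xv_def by auto
  define S where "S = chair n (replicate n l) (replicate n (l - 1))"
  have S_eq: "S = {x. length x = n \<and> (\<forall>i<n. 0 \<le> x ! i \<and> x ! i < l) \<and> (\<exists>j<n. x ! j = 0)}"
    unfolding S_def by (rule chair_eq)
  have lat: "is_lattice n \<Lambda>"
    unfolding is_lattice_def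
  proof (intro exI[of _ b] conjI allI impI)
    show "length (b i) = n" for i by (simp add: b_def bv_def)
  next
    fix c :: "nat \<Rightarrow> real" and i
    assume H: "\<forall>j<n. (\<Sum>i<n. c i * real_of_int (b i ! j)) = 0" and i: "i < n"
    have H2: "c j * real_of_int l = c (pr n j) * (real_of_int l - 1)" if "j < n" for j
      using H[rule_format, OF that] rowsum[OF that n2, of c l] by (simp add: b_def)
    define A where "A = Max ((\<lambda>j. \<bar>c j\<bar>) ` {..<n})"
    have Age: "\<forall>j<n. \<bar>c j\<bar> \<le> A" unfolding A_def by (auto intro: Max_ge)
    have "A \<in> (\<lambda>j. \<bar>c j\<bar>) ` {..<n}" unfolding A_def using n0 by (intro Max_in) auto
    then obtain j0 where j0: "j0 < n" "\<bar>c j0\<bar> = A" by auto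
    have "\<bar>c j0 * real_of_int l\<bar> = \<bar>c (pr n j0) * (real_of_int l - 1)\<bar>"
      using H2[OF j0(1)] by simp
    moreover have "\<bar>real_of_int l\<bar> = real_of_int l" "\<bar>real_of_int l - 1\<bar> = real_of_int l - 1"
      using l2 by auto
    ultimately have "\<bar>c j0\<bar> * real_of_int l = \<bar>c (pr n j0)\<bar> * (real_of_int l - 1)"
      by (simp add: abs_mult)
    also have "\<dots> \<le> A * (real_of_int l - 1)" using Age pr_less[OF j0(1)] l2 by (intro mult_right_mono) auto
    finally have "A * real_of_int l \<le> A * (real_of_int l - 1)" using j0 by simp
    then have "A \<le> 0" by (simp add: algebra_simps)
    then show "c i = 0" using Age i by force
  qed (simp add: \<Lambda>_def)
  have disj: "translate X S \<inter> translate Y S = {}" if X: "X \<in> \<Lambda>" and Y: "Y \<in> \<Lambda>" and XY: "X \<noteq> Y" for X Y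
  proof (rule ccontr)
    assume "translate X S \<inter> translate Y S \<noteq> {}"
    then obtain s t where st: "s \<in> S" "t \<in> S" and eq: "map2 (+) X s = map2 (+) Y t"
      unfolding translate_def by auto
    obtain z z' where zz: "X = Xv z" "Y = Xv z'" using X Y \<Lambda>_eq by auto
    define d where "d i = z' i - z i" for i
    have sl: "length s = n" "length t = n" using st S_eq by auto
    have e: "\<forall>j<n. s ! j - t ! j = l * d j - (l - 1) * d (pr n j)"
    proof (intro allI impI)
      fix j assume j: "j < n"
      have "map2 (+) X s ! j = map2 (+) Y t ! j" using eq by simp
      then have "X ! j + s ! j = Y ! j + t ! j" using j sl zz Xv_len by simp
      then show "s ! j - t ! j = l * d j - (l - 1) * d (pr n j)"
        using j zz Xv_nth by (simp add: d_def algebra_simps)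
    qed
    have e2: "\<forall>j<n. t ! j - s ! j = l * (- d j) - (l - 1) * (- d (pr n j))"
      using e by (auto simp: algebra_simps)
    have sb: "\<forall>j<n. 0 \<le> s ! j \<and> s ! j < l" "\<exists>j<n. s ! j = 0" using st(1) S_eq by auto
    have tb: "\<forall>j<n. 0 \<le> t ! j \<and> t ! j < l" "\<exists>j<n. t ! j = 0" using st(2) S_eq by auto
    have d1: "\<forall>j<n. d j \<le> 0"
      using nonpos[where n=n and l=l and d=d and s="\<lambda>j. s ! j" and t="\<lambda>j. t ! j"] n0 l2 e sb tb by auto
    have d2: "\<forall>j<n. - d j \<le> 0"
      using nonpos[where n=n and l=l and d="\<lambda>j. - d j" and s="\<lambda>j. t ! j" and t="\<lambda>j. s ! j"] n0 l2 e2 sb tb by auto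
    have "X = Y"
    proof (rule nth_equalityI)
      show "length X = length Y" using zz Xv_len by simp
      fix j assume "j < length X"
      then have j: "j < n" using zz Xv_len by simp
      have "d j = 0" "d (pr n j) = 0" using d1 d2 j pr_less[OF j] by force+
      then show "X ! j = Y ! j" using zz Xv_nth j by (simp add: d_def)
    qed
    then show False using XY by simp
  qed
  have cover: "(\<Union>X\<in>\<Lambda>. translate X S) = int_space n"
  proof
    show "(\<Union>X\<in>\<Lambda>. translate X S) \<subseteq> int_space n"
      using S_eq \<Lambda>_eq Xv_len by (auto simp: translate_def int_space_def)
  next
    show "int_space n \<subseteq> (\<Union>X\<in>\<Lambda>. translate X S)"
    proof
      fix x assume "x \<in> int_space n"
      then have xl: "length x = n" by (simp add: int_space_def)
      define A where "A = {c :: nat \<Rightarrow> int. \<forall>j<n. l * c j - (l - 1) * c (pr n j) \<le> x ! j}"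
      have bound: "(\<Sum>j<n. c j) \<le> (\<Sum>j<n. x ! j)" if "c \<in> A" for c
      proof -
        have "(\<Sum>j<n. l * c j - (l - 1) * c (pr n j)) \<le> (\<Sum>j<n. x ! j)"
          using that by (intro sum_mono) (auto simp: A_def)
        also have "(\<Sum>j<n. l * c j - (l - 1) * c (pr n j)) = l * (\<Sum>j<n. c j) - (l - 1) * (\<Sum>j<n. c (pr n j))"
          by (simp add: sum_subtractf sum_distrib_left)
        finally show ?thesis using sum_pr[OF n0, of c] by (simp add: algebra_simps)
      qed
      define M where "M = (\<Sum>j<n. \<bar>x ! j\<bar>)"
      have MA: "(\<lambda>_. - M) \<in> A"
      proof -
        have "\<bar>x ! j\<bar> \<le> M" if "j < n" for j
          unfolding M_def using that by (intro member_le_sum) auto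
        then have "- M \<le> x ! j" if "j < n" for j using that abs_le_D2[of "x ! j" M] by fastforce
        then show ?thesis by (auto simp: A_def algebra_simps)
      qed
      define P where "P k \<longleftrightarrow> (\<exists>c\<in>A. (\<Sum>j<n. x ! j) - (\<Sum>j<n. c j) = int k)" for k
      have "P (nat ((\<Sum>j<n. x ! j) - (\<Sum>j<n. (\<lambda>_. - M) j)))"
        unfolding P_def using MA bound[OF MA] by (intro bexI[of _ "\<lambda>_. - M"]) auto
      then have "P (LEAST k. P k)" by (rule LeastI)
      then obtain c where c: "c \<in> A" and ck: "(\<Sum>j<n. x ! j) - (\<Sum>j<n. c j) = int (LEAST k. P k)"
        unfolding P_def by auto
      have cmax: "(\<Sum>j<n. c' j) \<le> (\<Sum>j<n. c j)" if "c' \<in> A" for c'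
      proof -
        have "P (nat ((\<Sum>j<n. x ! j) - (\<Sum>j<n. c' j)))"
          unfolding P_def using that bound[OF that] by (intro bexI[of _ c']) auto
        then have "(LEAST k. P k) \<le> nat ((\<Sum>j<n. x ! j) - (\<Sum>j<n. c' j))" by (rule Least_le)
        then show ?thesis using ck bound[OF that] by linarith
      qed
      define sv where "sv = map (\<lambda>j. x ! j - (l * c j - (l - 1) * c (pr n j))) [0..<n]"
      have sv_nth: "sv ! j = x ! j - (l * c j - (l - 1) * c (pr n j))" if "j < n" for j
        using that by (simp add: sv_def)
      have sv_ge: "0 \<le> sv ! j" if "j < n" for j using c that sv_nth by (auto simp: A_def)
      have sv_lt: "sv ! j < l" if j: "j < n" for j
      proof (rule ccontr)
        assume "\<not> sv ! j < l"
        then have big: "l * c j - (l - 1) * c (pr n j) + l \<le> x ! j" using sv_nth[OF j] by simp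
        define c' where "c' k = c k + (if k = j then 1 else 0)" for k
        have "c' \<in> A" unfolding A_def
        proof (intro CollectI allI impI)
          fix k assume k: "k < n"
          show "l * c' k - (l - 1) * c' (pr n k) \<le> x ! k"
          proof (cases "k = j")
            case True
            then show ?thesis using pr_neq[OF n2 j] big by (simp add: c'_def algebra_simps)
          next
            case False
            have "(l - 1) * c (pr n k) \<le> (l - 1) * c' (pr n k)" using l2
              by (intro mult_left_mono) (auto simp: c'_def)
            then show ?thesis using False c k by (auto simp: c'_def A_def)
          qed
        qed
        moreover have "(\<Sum>k<n. c' k) = (\<Sum>k<n. c k) + 1"
          using j by (simp add: c'_def sum.distrib)
        ultimately show False using cmax by force
      qed
      have sv_z: "\<exists>j<n. sv ! j = 0"
      proof (rule ccontr)
        assume "\<not> ?thesis"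
        then have one: "\<forall>j<n. 1 \<le> sv ! j" using sv_ge by force
        define c' where "c' k = c k + 1" for k
        have "c' \<in> A" unfolding A_def
        proof (intro CollectI allI impI)
          fix k assume k: "k < n"
          show "l * c' k - (l - 1) * c' (pr n k) \<le> x ! k"
          proof -
            have "1 \<le> sv ! k" using one k by auto
            then show ?thesis using sv_nth[OF k] by (simp add: c'_def algebra_simps)
          qed
        qed
        moreover have "(\<Sum>k<n. c' k) = (\<Sum>k<n. c k) + int n"
          by (simp add: c'_def sum.distrib)
        ultimately show False using cmax n0 by force
      qed
      have svS: "sv \<in> S" using S_eq sv_ge sv_lt sv_z by (auto simp: sv_def)
      have "x = map2 (+) (Xv c) sv"
      proof (rule nth_equalityI)
        show "length x = length (map2 (+) (Xv c) sv)" using xl Xv_len by (simp add: sv_def)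
        fix j assume "j < length x"
        then have j: "j < n" using xl by simp
        then show "x ! j = map2 (+) (Xv c) sv ! j"
          using Xv_nth[OF j] sv_nth[OF j] Xv_len by (simp add: sv_def)
      qed
      then have "x \<in> translate (Xv c) S" using svS unfolding translate_def by auto
      moreover have "Xv c \<in> \<Lambda>" using \<Lambda>_eq by auto
      ultimately show "x \<in> (\<Union>X\<in>\<Lambda>. translate X S)" by auto
    qed
  qed
  have "lattice_tiling n \<Lambda> S"
    unfolding lattice_tiling_def using lat disj cover by blast
  then show ?thesis unfolding S_def by blast
qed

end
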